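(* Consider the inexact version of EDANNI described in the context, and assume: (A1) bounded delay: there is an integer $\tau\ge0$ such that for every $i\in[m]$ and $t\ge0$, $i\in\mathcal{A}_t\cup\cdots\cup\mathcal{A}_{\max\{t-\tau,0\}}$; (A2) each $\mathcal{L}_j$ is differentiable with $L$-Lipschitz gradient; (A3) each $\mathcal{L}_j$ is strongly convex with modulus $\sigma^2>0$: $\mathcal{L}_j(x)\ge\mathcal{L}_j(y)+\langle\nabla\mathcal{L}_j(y),x-y\rangle+\frac{\sigma^2}{2}\|x-y\|^2$ for all $x,y$; (A5) there is a constant $c_1>0$ with $\|\epsilon^t\|^2<c_1\|x^t-x^{t-1}\|^2$ for all $t>0$. Let $\delta>0$ and $\delta_1>(2L+\rho+1)/\sigma^2$, set $D:=\frac{\rho}{2}(1+\delta_1)+\delta_1$ and $\eta:=1+\frac1D$, and suppose $\frac{\delta_1L+\frac{\rho}{2}(1+\delta_1)+\frac12}{D}+\frac{3L}{2}-\frac{\rho-1}{2}+L\delta\tau<0$ and $\frac{\delta_1L+\frac{\rho}{2}(1+\delta_1)+\frac12}{D}+\frac{3L}{2}-\frac{\rho-1}{2}+L\delta\tau-\frac{(\rho-c_1)\eta}{2}+\Big(\frac{L}{\delta}+\frac{\frac{\delta_1}{2}L^2\tau}{D}\Big)\frac{\eta^\tau-1}{\eta-1}+\frac{c_1\eta}{D}<0.$ Then the sequence generated by inexact EDANNI satisfies, for all $t\ge0$, $0\le F(x^{t+1},x^t)-F(x^*,x^* )\le\frac{1}{\eta^t}\big(F(x^1,x^0)-F(x^*,x^*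 )\big).$
   Context: Problem setting: integers $m\ge 2$, $n\ge1$, $p\ge1$. For $j\in[m]$, $i\in[n]$, $l_{ji}:\mathbb{R}^p\to\mathbb{R}$ are smooth loss functions; $h:\mathbb{R}^p\to\mathbb{R}\cup\{+\infty\}$ is proper, lower semicontinuous and convex. $\mathcal{L}_j(x)=\frac1n\sum_{i}l_{ji}(x)$, $\mathcal{L}(x)=\frac1m\sum_j\mathcal{L}_j(x)+h(x)$, and $x^*$ is the minimizer of $\mathcal{L}$. Machine 1 is the master. Inexact EDANNI: given $x^0$ and $\rho\ge0$, at each iteration $t=0,1,\dots$ there is a set $\mathcal{A}_t\subseteq[m]$ of machines whose gradients arrive at iteration $t$, with $\mathcal{A}_0=[m]$; $t_j$ is the latest iteration $s\le t$ with $j\in\mathcal{A}_s$ (with $t_1=t$). The master computes $x^{t+1}$ such that for some error vector $\epsilon^t$, $\epsilon^t\in\nabla\mathcal{L}_1(x^{t+1})+\frac1m\sum_{j\in[m]}\nabla\mathcal{L}_j(x^{t_j})-\nabla\mathcal{L}_1(x^{t_1})+\partial h(x^{t+1})+\rho(x^{t+1}-x^t).$ Define $F(x,y)=\frac1m\sum_{j\in[m]}\mathcal{L}_j(x)+\frac{\rho}{2}\|x-y\|^2+h(x)$, so $F(x^*,x^* )=\mathcal{L}(x^* )$. *)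

theory Defs
  imports "HOL-Analysis.Analysis"
begin

(* Smoothness (C^infinity) of a real-valued function on a Euclidean space:
   it is continuous and all its partial derivatives exist and are again smooth
   (greatest fixed point, i.e. partial derivatives of every order exist and are continuous). *)
coinductive smooth_fun :: "('a::euclidean_space \<Rightarrow> real) \<Rightarrow> bool" where
  "continuous_on UNIV f \<Longrightarrow>
   (\<forall>b\<in>Basis. \<exists>g. (\<forall>x. ((\<lambda>s. f (x + s *\<^sub>R b)) has_real_derivative g x) (at 0)) \<and> smooth_fun g)
   \<Longrightarrow> smooth_fun f"

definition proper_fun :: "('a \<Rightarrow> ereal) \<Rightarrow> bool" where
  "proper_fun h \<longleftrightarrow> (\<forall>x. h x \<noteq> -\<infinity>) \<and> (\<exists>x. h x \<noteq> \<infinity>)"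

definition lsc_fun :: "('a::topological_space \<Rightarrow> ereal) \<Rightarrow> bool" where
  "lsc_fun h \<longleftrightarrow> (\<forall>c. closed {x. h x \<le> c})"

definition convex_fun :: "('a::real_vector \<Rightarrow> ereal) \<Rightarrow> bool" where
  "convex_fun h \<longleftrightarrow> (\<forall>x y u. 0 \<le> u \<and> u \<le> 1 \<longrightarrow>
      h ((1 - u) *\<^sub>R x + u *\<^sub>R y) \<le> ereal (1 - u) * h x + ereal u * h y)"

definition subdiff :: "('a::real_inner \<Rightarrow> ereal) \<Rightarrow> 'a \<Rightarrow> 'a set" where
  "subdiff h x = {g. h x \<noteq> \<infinity> \<and> (\<forall>y. h y \<ge> h x + ereal (inner g (y - x)))}"

(* t_j: latest iteration s \<le> t with j \<in> A s; for the master (j = 1), t_1 = t *)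
definition tlast :: "(nat \<Rightarrow> nat set) \<Rightarrow> nat \<Rightarrow> nat \<Rightarrow> nat" where
  "tlast A j t = (if j = 1 then t else (GREATEST s. s \<le> t \<and> j \<in> A s))"

end

theory Submission
  imports Defs
begin



lemma param_lemma:
  fixes r L s2 c1 dl d1 D eta tr :: real
  assumes s2pos: "s2 > 0" and s2L: "s2 \<le> L" and r0: "r \<ge> 0" and c1: "c1 > 0"
    and dl: "dl > 0" and tr0: "tr \<ge> 0"
    and d1: "d1 > (2 * L + r + 1) / s2"
    and D_def: "D = r / 2 * (1 + d1) + d1"
    and eta_def: "eta = 1 + 1 / D"
    and S0: "S \<ge> 0"
    and cond1: "(d1 * L + r / 2 * (1 + d1) + 1 / 2) / D + 3 * L / 2 - (r - 1) / 2 + L * dl * tr < 0"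
    and cond2: "(d1 * L + r / 2 * (1 + d1) + 1 / 2) / D + 3 * L / 2 - (r - 1) / 2 + L * dl * tr
                 - (r - c1) * eta / 2
                 + (L / dl + (d1 / 2 * L^2 * tr) / D) * S
                 + c1 * eta / D < 0"
    and Q_def: "Q = s2 * D"
    and lam_def: "lam = 1 - r / Q"
    and K_def: "K = - ((d1 * L + r / 2 * (1 + d1) + 1 / 2) / D + 3 * L / 2 - (r - 1) / 2 + L * dl * tr)"
    and M_def: "M = 1 + 2 * K + L + L * dl * tr + r / Q"
    and beta_def: "beta = r / 2 + s2 / 2 - r / (2 * D) - r^2 / (2 * Q)"
  shows "M / 2 + lam * (L + L * dl * tr / 2) - beta + 8 * L^2 / Q \<le> 0"
    and "c1 * (lam^2 / (2 * M) + 3 / (2 * Q)) - r / 2 + S * (lam * L / (2 * dl) + (12/5) * L^2 * tr / (2 * Q)) \<le> 0"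
    and "0 < lam" "lam \<le> 1" "0 < M" "0 < Q" "0 < D" "r < Q"
proof -
  define P where "P = (d1 * L + r / 2 * (1 + d1) + 1 / 2) / D"
  have L0: "L > 0" using s2pos s2L by linarith
  have g1: "s2 * d1 > 2 * L + r + 1"
    using d1 s2pos by (simp add: pos_divide_less_eq mult.commute)
  have d1pos: "d1 > 0"
  proof -
    have "(2 * L + r + 1) / s2 > 0" using L0 r0 s2pos by simp
    thus ?thesis using d1 by linarith
  qed
  have d1ge1: "d1 \<ge> 1"
  proof (rule ccontr)
    assume "\<not> 1 \<le> d1"
    hence "s2 * d1 \<le> s2 * 1" using s2pos by (intro mult_left_mono) auto
    thus False using g1 s2L L0 r0 by linarith
  qed
  have Dpos: "D > 0"
  proof -
    have "r / 2 * (1 + d1) \<ge> 0" using r0 d1pos by simp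
    thus ?thesis using D_def d1pos by linarith
  qed
  have PD: "P * D = d1 * L + r / 2 * (1 + d1) + 1 / 2" using Dpos by (simp add: P_def)
  have Knp: "2 * K = r - 1 - 3 * L - 2 * (L * dl * tr) - 2 * P"
    unfolding K_def P_def by (simp add: field_simps)
  have Kpos: "K > 0" using cond1 by (simp add: K_def)
  have Ldt: "L * dl * tr \<ge> 0" using L0 dl tr0 by simp
  have Pnn: "P \<ge> 0"
  proof -
    have "d1 * L + r / 2 * (1 + d1) + 1 / 2 \<ge> 0" using L0 d1pos r0 by simp
    thus ?thesis using Dpos by (simp add: P_def)
  qed
  have Pge: "P * (r + 2) \<ge> r"
  proof -
    have e: "(d1 * L + r / 2 * (1 + d1) + 1 / 2) * (r + 2) - r * (r / 2 * (1 + d1) + d1) = (r + 2) * d1 * L + 3 * r / 2 + 1"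
      by (simp add: field_simps)
    have "(P * D) * (r + 2) - r * D = (r + 2) * d1 * L + 3 * r / 2 + 1"
      using e PD D_def by simp
    also have "\<dots> \<ge> 0" using d1pos L0 r0 by simp
    finally have "(P * (r + 2)) * D \<ge> r * D" by (simp add: algebra_simps)
    thus ?thesis using Dpos by simp
  qed
  have rbig: "r - 1 > 3 * L + 2 * P" using Kpos Knp Ldt by linarith
  have r2: "r > 2"
  proof -
    have "(r - 1) * (r + 2) > (2 * P) * (r + 2)" using rbig L0 r0
      by (intro mult_strict_right_mono) auto
    hence "(r - 1) * (r + 2) > 2 * r" using Pge by linarith
    hence "(r - 2) * (r + 1) > 0" by (simp add: algebra_simps)
    thus ?thesis using r0 by (simp add: zero_less_mult_iff)
  qed
  have r3L: "r \<ge> 3 * L" using rbig Pnn by linarith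
  have Qeq: "2 * Q = r * s2 + (r + 2) * (s2 * d1)" by (simp add: Q_def D_def algebra_simps)
  have Qgt: "2 * Q > (r + 2) * (2 * L + r + 1)"
  proof -
    have "(r + 2) * (2 * L + r + 1) < (r + 2) * (s2 * d1)"
      using g1 r0 by (intro mult_strict_left_mono) auto
    moreover have "r * s2 \<ge> 0" using r0 s2pos by simp
    ultimately show ?thesis using Qeq by linarith
  qed
  have Q2: "2 * Q > (r + 2) * (r + 1)"
  proof -
    have "(r + 2) * (2 * L + r + 1) \<ge> (r + 2) * (r + 1)"
      using L0 r0 by (intro mult_left_mono) auto
    thus ?thesis using Qgt by linarith
  qed
  have Qpos: "Q > 0"
  proof -
    have "(r + 2) * (r + 1) > 0" using r0 by simp
    thus ?thesis using Q2 by linarith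
  qed
  have rQ: "r < Q"
  proof -
    have "(r + 2) * (r + 1) = r * r + 3 * r + 2" by (simp add: algebra_simps)
    moreover have "r * r \<ge> 0" by simp
    ultimately show ?thesis using Q2 r0 by linarith
  qed
  have lam_pos: "0 < lam" using rQ Qpos by (simp add: lam_def)
  have lam_le: "lam \<le> 1" using r0 Qpos by (simp add: lam_def)
  show "0 < lam" "lam \<le> 1" "0 < Q" "0 < D" "r < Q" using lam_pos lam_le Qpos Dpos rQ by auto
  have rQ0: "r / Q \<ge> 0" using r0 Qpos by simp
  have Mpos: "M > 0" using Kpos L0 Ldt rQ0 unfolding M_def by linarith
  show "0 < M" by (rule Mpos)
  show "M / 2 + lam * (L + L * dl * tr / 2) - beta + 8 * L^2 / Q \<le> 0"
  proof -
    have "lam * (L + L * dl * tr / 2) \<le> L + L * dl * tr / 2"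
      using lam_le L0 Ldt by (simp add: mult_left_le_one_le)
    moreover have eqM: "M = r - 2 * L - L * dl * tr - 2 * P + r / Q" using Knp unfolding M_def by linarith
    moreover have "M / 2 = r / 2 - L - L * dl * tr / 2 - P + r / (2 * Q)" unfolding eqM by (simp add: field_simps)
    moreover have "beta = r / 2 + s2 / 2 - r / (2 * D) - r^2 / (2 * Q)" by (simp add: beta_def)
    ultimately have "M / 2 + lam * (L + L * dl * tr / 2) - beta + 8 * L^2 / Q
        \<le> - P + r / (2 * Q) - s2 / 2 + r / (2 * D) + r^2 / (2 * Q) + 8 * L^2 / Q"
      by linarith
    also have "\<dots> = (- s2 * (P * D) - s2 * Q / 2 + r / 2 + r * s2 / 2 + r^2 / 2 + 8 * L^2) / Q"
      using Qpos Dpos s2pos by (simp add: Q_def field_simps)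
    also have "\<dots> \<le> 0"
    proof -
      have a: "(s2 * d1) * (L + r / 2) \<ge> (2 * L + r + 1) * (L + r / 2)"
        using g1 L0 r0 by (intro mult_right_mono) auto
      have b: "s2 * (P * D) = (s2 * d1) * (L + r / 2) + r * s2 / 2 + s2 / 2"
        unfolding PD by (simp add: algebra_simps)
      have c: "s2 * Q \<ge> 0" using Qpos s2pos by auto
      have d0: "L * (3 * L) \<le> L * r" using r3L L0 by (intro mult_left_mono) auto
      have d1': "3 * L^2 = L * (3 * L)" by (simp add: power2_eq_square)
      have E: "(2 * L + r + 1) * (L + r / 2) = 2 * L^2 + 2 * (L * r) + L + r^2 / 2 + r / 2"
        by (simp add: field_simps power2_eq_square)
      have "- s2 * (P * D) - s2 * Q / 2 + r / 2 + r * s2 / 2 + r^2 / 2 + 8 * L^2 \<le> 0"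
        using a b c d0 d1' E s2pos L0 by linarith
      thus ?thesis using Qpos by (simp add: divide_nonpos_pos)
    qed
    finally show ?thesis .
  qed
  define rr where "rr = r / Q"
  define A0 where "A0 = r * eta / 2"
  define R where "R = A0 + K"
  define m where "m = r / (2 * R)"
  have eta1: "eta > 1" using Dpos eta_def by simp
  have A0ge: "A0 \<ge> r / 2" using eta1 r0 by (simp add: A0_def mult_le_cancel_left1 less_imp_le)
  have Rpos: "R > 0" using A0ge Kpos r0 by (simp add: R_def)
  have rr0: "rr > 0" using r2 Qpos by (simp add: rr_def)
  have rr3: "rr \<le> 1 / 3"
  proof -
    have "(r - 1) * (r - 2) \<ge> 0" using r2 by simp
    hence "3 * r \<le> Q" using Q2 by (simp add: algebra_simps)
    thus ?thesis using Qpos by (simp add: rr_def divide_le_eq)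
  qed
  have rr4: "rr * (r + 3) \<le> 2"
  proof -
    have "r * (r + 3) \<le> 2 * Q" using Q2 by (simp add: algebra_simps)
    thus ?thesis using Qpos by (simp add: rr_def field_simps)
  qed
  have lam_rr: "lam = 1 - rr" by (simp add: lam_def rr_def)
  have Mge: "M \<ge> 1 + 2 * K + rr" using L0 Ldt by (simp add: M_def rr_def)
  have Kmax: "2 * K * (r + 2) \<le> (r - 1) * (r + 2) - 2 * r"
  proof -
    have "2 * K \<le> r - 1 - 2 * P" using Knp L0 Ldt by linarith
    hence "2 * K * (r + 2) \<le> (r - 1 - 2 * P) * (r + 2)" using r0 by (intro mult_right_mono) auto
    moreover have "(r - 1 - 2 * P) * (r + 2) = (r - 1) * (r + 2) - 2 * (P * (r + 2))" by (simp add: algebra_simps)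
    ultimately show ?thesis using Pge by linarith
  qed
  have key: "3 * K * (1 + rr) \<le> A0 * (3 * r - 3 - rr * (r + 3))"
  proof -
    have k1: "3 * K * (1 + rr) \<le> 4 * K" using Kpos rr3 by simp
    have k2: "2 * (A0 * (3 * r - 3 - rr * (r + 3))) \<ge> r * (3 * r - 5)"
    proof -
      have "A0 * (3 * r - 3 - rr * (r + 3)) \<ge> A0 * (3 * r - 5)"
        using rr4 A0ge r0 by (intro mult_left_mono) auto
      moreover have "(2 * A0) * (3 * r - 5) \<ge> r * (3 * r - 5)"
        using A0ge r2 by (intro mult_right_mono) auto
      ultimately show ?thesis by (simp add: algebra_simps)
    qed
    have k3: "8 * K * (r + 2) \<le> r * (3 * r - 5) * (r + 2)"
    proof -
      have h: "3 * r * ((r - 2) * (r + 1)) \<ge> 0" using r2 by simp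
      have e1: "r * (3 * r - 5) * (r + 2) = 3 * r * ((r - 2) * (r + 1)) + 4 * ((r - 1) * (r + 2)) - 8 * r + 8"
        by (simp add: algebra_simps)
      have "8 * K * (r + 2) = 4 * (2 * K * (r + 2))" by simp
      thus ?thesis using Kmax h e1 by linarith
    qed
    have "8 * K \<le> r * (3 * r - 5)"
    proof (rule mult_right_le_imp_le)
      show "8 * K * (r + 2) \<le> r * (3 * r - 5) * (r + 2)" by (rule k3)
      show "0 < r + 2" using r0 by simp
    qed
    thus ?thesis using k1 k2 by linarith
  qed
  have v1: "R * (lam^2 / M + 3 / Q) \<le> A0"
  proof -
    have h1: "R / M \<le> A0 / (1 + rr)"
    proof -
      have "R / M \<le> R / (1 + 2 * K + rr)"
        using Mge Rpos rr0 Kpos by (intro divide_left_mono) auto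
      also have "\<dots> \<le> A0 / (1 + rr)"
      proof -
        have "R * (1 + rr) \<le> A0 * (1 + 2 * K + rr)"
        proof -
          have "K * (1 + rr) \<le> K * (2 * A0)" using Kpos rr3 A0ge r2 by (intro mult_left_mono) auto
          thus ?thesis by (simp add: R_def algebra_simps)
        qed
        moreover have "1 + 2 * K + rr > 0" "1 + rr > 0" using rr0 Kpos by auto
        ultimately show ?thesis by (simp add: field_simps)
      qed
      finally show ?thesis .
    qed
    have h2: "R * (3 / Q) \<le> A0 * rr * (3 - rr) / (1 + rr)"
    proof -
      have "3 * R * (1 + rr) \<le> r * A0 * (3 - rr)" using key by (simp add: R_def algebra_simps)
      hence m1: "(3 * R * (1 + rr)) * rr \<le> (r * A0 * (3 - rr)) * rr" using rr0 by (intro mult_right_mono) auto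
      have q: "3 / Q = 3 * rr / r" using r2 by (simp add: rr_def)
      have "r > 0" "1 + rr > 0" using r2 rr0 by auto
      thus ?thesis unfolding q using m1 by (simp add: field_simps)
    qed
    have "R * (lam^2 / M + 3 / Q) = (R / M) * (1 - rr)^2 + R * (3 / Q)"
      by (simp add: lam_rr algebra_simps)
    also have "\<dots> \<le> A0 / (1 + rr) * (1 - rr)^2 + A0 * rr * (3 - rr) / (1 + rr)"
      using h1 h2 by (intro add_mono mult_right_mono) auto
    also have "\<dots> = A0"
    proof -
      have e1: "A0 * rr * (3 - rr) / (1 + rr) = A0 / (1 + rr) * (rr * (3 - rr))" by simp
      have e2: "(1 - rr)^2 + rr * (3 - rr) = 1 + rr" by (simp add: algebra_simps power2_eq_square)
      have e3: "A0 / (1 + rr) * (1 + rr) = A0" using rr0 by simp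
      have "A0 / (1 + rr) * (1 - rr)^2 + A0 * rr * (3 - rr) / (1 + rr)
          = A0 / (1 + rr) * ((1 - rr)^2 + rr * (3 - rr))" unfolding e1 by (simp only: distrib_left)
      thus ?thesis unfolding e2 e3 .
    qed
    finally show ?thesis .
  qed
  have v1': "lam^2 / (2 * M) + 3 / (2 * Q) \<le> m * eta * (1 / 2 + 1 / D)"
  proof -
    have "A0 \<le> r * eta * (1 / 2 + 1 / D)" using Dpos eta1 r0 by (simp add: A0_def algebra_simps)
    hence "R * (lam^2 / M + 3 / Q) \<le> r * eta * (1 / 2 + 1 / D)" using v1 by linarith
    thus ?thesis using Rpos by (simp add: m_def field_simps)
  qed
  have Rle: "R \<le> r - 1 / 2 - r * d1 / (2 * D)"
  proof -
    have f1: "P = r * d1 / (2 * D) + (d1 * L + r / 2 + 1 / 2) / D"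
      using Dpos by (simp add: P_def field_simps)
    have f2: "(d1 * L + r / 2 + 1 / 2) / D \<ge> r / (2 * D)"
      using Dpos d1pos L0 by (simp add: divide_right_mono field_simps)
    have f3: "A0 = r / 2 + r / (2 * D)" using Dpos by (simp add: A0_def eta_def field_simps)
    have f4: "2 * K \<le> r - 1 - 2 * P" using Knp L0 Ldt by linarith
    show ?thesis using f1 f2 f3 f4 unfolding R_def by linarith
  qed
  have v2: "lam / 2 \<le> m"
  proof -
    have "r * d1 / (2 * D) \<ge> 0" using r0 d1pos Dpos by simp
    moreover have "lam * R \<le> R" using lam_le lam_pos Rpos by (intro mult_left_le_one_le) auto
    ultimately have "lam * R \<le> r" using Rle by linarith
    thus ?thesis using Rpos by (simp add: m_def field_simps)
  qed
  have v3: "12 / 5 \<le> m * (s2 * d1)"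
  proof -
    have t1: "r * d1 / (2 * D) \<ge> r / (2 * r + 2)"
    proof -
      have rr1: "1 * (r * r) \<le> d1 * (r * r)" using d1ge1 r0 by (intro mult_right_mono) auto
      have "r * (2 * D) \<le> r * d1 * (2 * r + 2)"
        using rr1 by (simp add: D_def algebra_simps)
      thus ?thesis using Dpos r0 by (simp add: field_simps)
    qed
    have t2: "24 * r - 12 - 24 * (r / (2 * r + 2)) \<le> 5 * r * (r + 1)"
    proof -
      have "(r - 2) * (10 * r^2 - 8 * r - 6) \<ge> 0"
      proof -
        have "10 * r^2 - 8 * r - 6 \<ge> 0"
        proof -
          have "r^2 \<ge> 2 * r" using r2 by (simp add: power2_eq_square)
          thus ?thesis using r2 by linarith
        qed
        thus ?thesis using r2 by simp
      qed
      hence "24 * ((r - 1 / 2) * (2 * r + 2) - r) \<le> 5 * r * (r + 1) * (2 * r + 2)"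
        by (simp add: algebra_simps power2_eq_square power3_eq_cube)
      thus ?thesis using r0 by (simp add: field_simps)
    qed
    have "24 * R \<le> 5 * r * (r + 1)" using Rle t1 t2 by linarith
    also have "\<dots> \<le> 5 * r * (s2 * d1)" using g1 L0 r0 by (intro mult_left_mono) auto
    finally have "24 * R \<le> 5 * r * (s2 * d1)" .
    thus ?thesis using Rpos by (simp add: m_def field_simps)
  qed
  have Scond: "c1 * eta * (1 / 2 + 1 / D) + S * (L / dl + (d1 / 2 * L^2 * tr) / D) < R"
  proof -
    have e1: "(r - c1) * eta / 2 = r * eta / 2 - c1 * eta / 2" by (simp add: left_diff_distrib diff_divide_distrib)
    have e2: "c1 * eta * (1 / 2 + 1 / D) = c1 * eta / 2 + c1 * eta / D" by (simp add: distrib_left)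
    have e3: "(r - 1) / 2 = r / 2 - 1 / 2" by (simp add: diff_divide_distrib)
    have e4: "(L / dl + (d1 / 2 * L^2 * tr) / D) * S = S * (L / dl + (d1 / 2 * L^2 * tr) / D)" by (simp add: mult.commute)
    show ?thesis using cond2 e1 e2 e3 e4 unfolding R_def A0_def K_def by linarith
  qed
  show "c1 * (lam^2 / (2 * M) + 3 / (2 * Q)) - r / 2 + S * (lam * L / (2 * dl) + (12/5) * L^2 * tr / (2 * Q)) \<le> 0"
  proof -
    have z1: "lam * L / (2 * dl) \<le> m * (L / dl)" using v2 L0 dl by (simp add: field_simps mult_right_mono)
    have z2: "(12/5) * L^2 * tr / (2 * Q) \<le> m * ((d1 / 2 * L^2 * tr) / D)"
    proof -
      have "(12/5) * (L^2 * tr) \<le> (m * (s2 * d1)) * (L^2 * tr)" using v3 tr0 by (intro mult_right_mono) auto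
      thus ?thesis using Dpos s2pos by (simp add: Q_def field_simps)
    qed
    have "c1 * (lam^2 / (2 * M) + 3 / (2 * Q)) \<le> c1 * (m * eta * (1 / 2 + 1 / D))"
      using v1' c1 by (intro mult_left_mono) auto
    moreover have "S * (lam * L / (2 * dl) + (12/5) * L^2 * tr / (2 * Q)) \<le> S * (m * (L / dl + (d1 / 2 * L^2 * tr) / D))"
      using z1 z2 S0 by (intro mult_left_mono) (auto simp: algebra_simps)
    moreover have "c1 * (m * eta * (1 / 2 + 1 / D)) + S * (m * (L / dl + (d1 / 2 * L^2 * tr) / D)) \<le> m * R"
    proof -
      have "m \<ge> 0" using Rpos r0 by (simp add: m_def)
      hence "m * (c1 * eta * (1 / 2 + 1 / D) + S * (L / dl + (d1 / 2 * L^2 * tr) / D)) \<le> m * R"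
        using Scond by (intro mult_left_mono) auto
      thus ?thesis by (simp add: algebra_simps)
    qed
    moreover have "m * R = r / 2" using Rpos by (simp add: m_def)
    ultimately show ?thesis by linarith
  qed
qed



lemma young_le:
  fixes x y c :: real
  assumes "c > 0"
  shows "x * y \<le> c / 2 * x^2 + y^2 / (2 * c)"
proof -
  have "0 \<le> (c * x - y)^2" by simp
  hence "2 * c * (x * y) \<le> c^2 * x^2 + y^2" by (simp add: power2_eq_square algebra_simps)
  hence "x * y \<le> (c^2 * x^2 + y^2) / (2 * c)" using assms by (simp add: field_simps)
  also have "\<dots> = c / 2 * x^2 + y^2 / (2 * c)" using assms by (simp add: field_simps power2_eq_square)
  finally show ?thesis .
qed

lemma sq_sum_le:
  fixes x y :: real
  assumes "c > 0"
  shows "(x + y)^2 \<le> (1 + c) * x^2 + (1 + 1 / c) * y^2"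
proof -
  have "2 * (x * y) \<le> 2 * (c / 2 * x^2 + y^2 / (2 * c))" using young_le[OF assms, of x y] by (intro mult_left_mono) auto
  hence "2 * (x * y) \<le> c * x^2 + y^2 / c" using assms by (simp add: field_simps)
  thus ?thesis by (simp add: power2_eq_square algebra_simps)
qed

lemma step_ineq:
  fixes d u ep e w :: "'a::real_inner"
    and pt pp ap Sw s c1 L r s2 D dl tr M :: real
  assumes desc: "pt \<le> pp + inner w d - s2 / 2 * (norm d)^2"
    and err: "pt \<le> inner w u - s2 / 2 * (norm u)^2"
    and wdef: "w = ep - e - r *\<^sub>R d"
    and epb: "(norm ep)^2 \<le> c1 * ap"
    and ed: "- inner e d \<le> L * (norm d)^2 + L * (norm d * s)"
    and en: "norm e \<le> 2 * L * norm d + L * s"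
    and s0: "0 \<le> s" and ss: "s^2 \<le> tr * Sw"
    and bs: "norm d * s \<le> tr * dl / 2 * (norm d)^2 + Sw / (2 * dl)"
    and s2: "s2 > 0" and Dp: "D > 0" and Qr: "r < s2 * D" and r0: "0 \<le> r" and Mp: "M > 0"
    and L0: "L \<ge> 0" and dl: "dl > 0" and c1: "c1 \<ge> 0"
    and Q_def: "Q = s2 * D"
    and lam_def: "lam = 1 - r / Q"
    and beta_def: "beta = r / 2 + s2 / 2 - r / (2 * D) - r^2 / (2 * Q)"
  shows "(1 + 1 / D) * (pt + r / 2 * (norm d)^2) - (pp + r / 2 * ap) \<le>
     (M / 2 + lam * (L + L * dl * tr / 2) - beta + 8 * L^2 / Q) * (norm d)^2
     + (c1 * (lam^2 / (2 * M) + 3 / (2 * Q)) - r / 2) * ap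
     + (lam * L / (2 * dl) + (12/5) * L^2 * tr / (2 * Q)) * Sw"
proof -
  define z where "z = ep - e"
  define a where "a = (norm d)^2"
  define b where "b = norm d"
  define eps where "eps = norm ep"
  define E2 where "E2 = (norm ep)^2"
  define IZ where "IZ = inner z d"
  define NZ where "NZ = (norm z)^2"
  define NE where "NE = norm e"
  have Qp: "Q > 0" using s2 Dp by (simp add: Q_def)
  have lam0: "lam \<ge> 0" using Qr Qp by (simp add: lam_def Q_def)
  have ab: "a = b^2" by (simp add: a_def b_def)
  have E2e: "E2 = eps^2" by (simp add: E2_def eps_def)
  have wd: "inner w d = IZ - r * a"
    by (simp add: wdef IZ_def z_def a_def inner_diff_left power2_norm_eq_inner)
  have wsq: "(norm w)^2 = NZ - 2 * r * IZ + r^2 * a"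
  proof -
    have "w = z - r *\<^sub>R d" by (simp add: wdef z_def)
    hence "(norm w)^2 = inner (z - r *\<^sub>R d) (z - r *\<^sub>R d)" by (simp add: power2_norm_eq_inner)
    also have "\<dots> = inner z z - 2 * r * inner z d + r^2 * inner d d"
      by (simp add: inner_diff_left inner_diff_right inner_commute power2_eq_square algebra_simps)
    finally show ?thesis by (simp add: NZ_def IZ_def a_def power2_norm_eq_inner)
  qed
  have err2: "pt \<le> (norm w)^2 / (2 * s2)"
  proof -
    have "inner w u \<le> norm w * norm u" by (rule norm_cauchy_schwarz)
    also have "\<dots> \<le> (1 / s2) / 2 * (norm w)^2 + (norm u)^2 / (2 * (1 / s2))"
      using young_le[of "1 / s2" "norm w" "norm u"] s2 by simp
    also have "\<dots> = (norm w)^2 / (2 * s2) + s2 / 2 * (norm u)^2" using s2 by (simp add: field_simps)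
    finally show ?thesis using err by linarith
  qed
  have A: "(1 + 1 / D) * (pt + r / 2 * a) - (pp + r / 2 * ap) \<le> lam * IZ + NZ / (2 * Q) - beta * a - r / 2 * ap"
  proof -
    have d1: "pt - pp \<le> IZ - r * a - s2 / 2 * a" using desc wd by (simp add: a_def)
    have d2: "pt + r / 2 * a \<le> (NZ - 2 * r * IZ + r^2 * a) / (2 * s2) + r / 2 * a"
      using err2 wsq by simp
    have d3: "(1 / D) * (pt + r / 2 * a) \<le> (1 / D) * ((NZ - 2 * r * IZ + r^2 * a) / (2 * s2) + r / 2 * a)"
      using d2 Dp by (intro mult_left_mono) auto
    have e1: "(1 + 1 / D) * (pt + r / 2 * a) - (pp + r / 2 * ap) = (pt - pp) + r / 2 * a - r / 2 * ap + (1 / D) * (pt + r / 2 * a)"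
      by (simp add: algebra_simps)
    have e2: "(IZ - r * a - s2 / 2 * a) + r / 2 * a - r / 2 * ap + (1 / D) * ((NZ - 2 * r * IZ + r^2 * a) / (2 * s2) + r / 2 * a)
        = lam * IZ + NZ / (2 * Q) - beta * a - r / 2 * ap"
      using s2 Dp by (simp add: lam_def beta_def Q_def field_simps power2_eq_square)
    show ?thesis using d1 d3 e1 e2 by linarith
  qed
  have B: "IZ \<le> eps * b + L * a + L * (b * s)"
  proof -
    have "inner ep d \<le> eps * b" unfolding eps_def b_def by (rule norm_cauchy_schwarz)
    moreover have "IZ = inner ep d - inner e d" by (simp add: IZ_def z_def inner_diff_left)
    ultimately show ?thesis using ed by (simp add: a_def b_def)
  qed
  have s1: "lam * IZ \<le> lam * (eps * b) + lam * (L * a) + lam * (L * (b * s))"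
  proof -
    have "lam * IZ \<le> lam * (eps * b + L * a + L * (b * s))" using B lam0 by (intro mult_left_mono) auto
    thus ?thesis by (simp add: algebra_simps)
  qed
  have s2': "lam * (eps * b) \<le> lam^2 * E2 / (2 * M) + M * a / 2"
  proof -
    have "(lam * eps) * b \<le> 1 / (2 * M) * (lam * eps)^2 + b^2 / (2 * (1 / (2 * M)) * 2 * 2) * 2"
      using young_le[of "1 / M" "lam * eps" b] Mp by (simp add: field_simps)
    hence "(lam * eps) * b \<le> (lam * eps)^2 / (2 * M) + M * b^2 / 2" by (simp add: field_simps)
    thus ?thesis by (simp add: E2e ab power_mult_distrib mult.assoc)
  qed
  have s3: "lam * (L * (b * s)) \<le> lam * (L * (tr * dl / 2 * a)) + lam * (L * (Sw / (2 * dl)))"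
  proof -
    have "L * (b * s) \<le> L * (tr * dl / 2 * a + Sw / (2 * dl))" using bs L0 by (intro mult_left_mono) (auto simp: a_def b_def)
    hence "lam * (L * (b * s)) \<le> lam * (L * (tr * dl / 2 * a + Sw / (2 * dl)))" using lam0 by (rule mult_left_mono)
    thus ?thesis by (simp add: algebra_simps)
  qed
  have NZb: "NZ \<le> 3 * E2 + 3 / 2 * NE^2"
  proof -
    have "norm z \<le> eps + NE" unfolding z_def eps_def NE_def by (rule norm_triangle_ineq4)
    hence "(norm z)^2 \<le> (eps + NE)^2" by (intro power_mono) auto
    also have "\<dots> \<le> (1 + 2) * eps^2 + (1 + 1 / 2) * NE^2" by (rule sq_sum_le) simp
    finally show ?thesis by (simp add: NZ_def E2e)
  qed
  have NEb: "NE^2 \<le> 32 / 3 * L^2 * a + 8 / 5 * L^2 * (tr * Sw)"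
  proof -
    have "NE^2 \<le> (2 * L * b + L * s)^2" using en by (intro power_mono) (auto simp: NE_def b_def)
    also have "\<dots> \<le> (1 + 5 / 3) * (2 * L * b)^2 + (1 + 1 / (5 / 3)) * (L * s)^2" by (rule sq_sum_le) simp
    also have "\<dots> = 32 / 3 * L^2 * a + 8 / 5 * L^2 * s^2" by (simp add: ab power_mult_distrib)
    also have "\<dots> \<le> 32 / 3 * L^2 * a + 8 / 5 * L^2 * (tr * Sw)" using ss by (intro add_left_mono mult_left_mono) auto
    finally show ?thesis .
  qed
  have s4: "NZ / (2 * Q) \<le> 3 * E2 / (2 * Q) + 3 / 2 * NE^2 / (2 * Q)"
  proof -
    have "NZ / (2 * Q) \<le> (3 * E2 + 3 / 2 * NE^2) / (2 * Q)" using NZb Qp by (intro divide_right_mono) auto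
    also have "\<dots> = 3 * E2 / (2 * Q) + 3 / 2 * NE^2 / (2 * Q)" by (simp add: add_divide_distrib)
    finally show ?thesis .
  qed
  have s5: "3 / 2 * NE^2 / (2 * Q) \<le> 8 * L^2 * a / Q + (12/5) * L^2 * tr * Sw / (2 * Q)"
  proof -
    have "3 / 2 * NE^2 \<le> 3 / 2 * (32 / 3 * L^2 * a + 8 / 5 * L^2 * (tr * Sw))" using NEb by (rule mult_left_mono) simp
    hence "3 / 2 * NE^2 / (2 * Q) \<le> 3 / 2 * (32 / 3 * L^2 * a + 8 / 5 * L^2 * (tr * Sw)) / (2 * Q)"
      using Qp by (intro divide_right_mono) auto
    also have "\<dots> = 8 * L^2 * a / Q + (12/5) * L^2 * tr * Sw / (2 * Q)" using Qp by (simp add: field_simps)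
    finally show ?thesis .
  qed
  have s6: "(lam^2 / (2 * M) + 3 / (2 * Q)) * E2 \<le> (lam^2 / (2 * M) + 3 / (2 * Q)) * (c1 * ap)"
  proof -
    have "lam^2 / (2 * M) + 3 / (2 * Q) \<ge> 0" using Mp Qp by simp
    thus ?thesis using epb by (intro mult_left_mono) (auto simp: E2_def)
  qed
  have eqE: "(lam^2 / (2 * M) + 3 / (2 * Q)) * E2 = lam^2 * E2 / (2 * M) + 3 * E2 / (2 * Q)"
    by (simp add: algebra_simps)
  have eqR: "(M / 2 + lam * (L + L * dl * tr / 2) - beta + 8 * L^2 / Q) * a
     + (c1 * (lam^2 / (2 * M) + 3 / (2 * Q)) - r / 2) * ap
     + (lam * L / (2 * dl) + (12/5) * L^2 * tr / (2 * Q)) * Sw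
     = M * a / 2 + lam * (L * a) + lam * (L * (tr * dl / 2 * a)) - beta * a + 8 * L^2 * a / Q
       + (lam^2 / (2 * M) + 3 / (2 * Q)) * (c1 * ap) - r / 2 * ap
       + lam * (L * (Sw / (2 * dl))) + (12/5) * L^2 * tr * Sw / (2 * Q)"
    by (simp add: algebra_simps)
  have "(1 + 1 / D) * (pt + r / 2 * a) - (pp + r / 2 * ap) \<le>
     (M / 2 + lam * (L + L * dl * tr / 2) - beta + 8 * L^2 / Q) * a
     + (c1 * (lam^2 / (2 * M) + 3 / (2 * Q)) - r / 2) * ap
     + (lam * L / (2 * dl) + (12/5) * L^2 * tr / (2 * Q)) * Sw"
    unfolding eqR using A s1 s2' s3 s4 s5 s6 eqE by linarith
  thus ?thesis by (simp add: a_def)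
qed



lemma window_swap:
  fixes a :: "nat \<Rightarrow> real" and eta :: real and tau T :: nat
  assumes a0: "\<And>k. a k \<ge> 0" and eta0: "eta \<ge> 0"
  shows "(\<Sum>t<T. eta^t * (\<Sum>k<Suc t. if Suc t \<le> k + tau then a k else 0))
         \<le> (\<Sum>i<tau. eta^i) * (\<Sum>k<T. eta^k * a k)"
proof -
  have e1: "(\<Sum>t<T. eta^t * (\<Sum>k<Suc t. if Suc t \<le> k + tau then a k else 0))
      = (\<Sum>t<T. \<Sum>k<T. if k \<le> t \<and> t < k + tau then eta^t * a k else 0)"
  proof (rule sum.cong[OF refl])
    fix t assume t: "t \<in> {..<T}"
    have "eta^t * (\<Sum>k<Suc t. if Suc t \<le> k + tau then a k else 0)
        = (\<Sum>k<Suc t. if Suc t \<le> k + tau then eta^t * a k else 0)"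
      unfolding sum_distrib_left by (rule sum.cong) auto
    also have "\<dots> = (\<Sum>k<Suc t. if k \<le> t \<and> t < k + tau then eta^t * a k else 0)"
      by (rule sum.cong) auto
    also have "\<dots> = (\<Sum>k<T. if k \<le> t \<and> t < k + tau then eta^t * a k else 0)"
      by (rule sum.mono_neutral_left) (use t in auto)
    finally show "eta^t * (\<Sum>k<Suc t. if Suc t \<le> k + tau then a k else 0)
        = (\<Sum>k<T. if k \<le> t \<and> t < k + tau then eta^t * a k else 0)" .
  qed
  also have "\<dots> = (\<Sum>k<T. \<Sum>t<T. if k \<le> t \<and> t < k + tau then eta^t * a k else 0)"
    by (rule sum.swap)
  also have "\<dots> \<le> (\<Sum>k<T. (\<Sum>i<tau. eta^i) * (eta^k * a k))"
  proof (rule sum_mono)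
    fix k assume "k \<in> {..<T}"
    have "(\<Sum>t<T. if k \<le> t \<and> t < k + tau then eta^t * a k else 0)
        = (\<Sum>t\<in>{t\<in>{..<T}. k \<le> t \<and> t < k + tau}. eta^t * a k)"
      by (rule sum.inter_filter[symmetric]) simp
    also have "\<dots> \<le> (\<Sum>t\<in>{k..<k + tau}. eta^t * a k)"
      using a0 eta0 by (intro sum_mono2) auto
    also have "\<dots> = (\<Sum>i\<in>{0..<tau}. eta^(i + k) * a k)"
      using sum.shift_bounds_nat_ivl[of "\<lambda>t. eta^t * a k" 0 k tau] by (simp add: add.commute)
    also have "\<dots> = (\<Sum>i<tau. eta^i) * (eta^k * a k)"
      by (simp add: atLeast0LessThan sum_distrib_right power_add mult.assoc)
    finally show "(\<Sum>t<T. if k \<le> t \<and> t < k + tau then eta^t * a k else 0) \<le> (\<Sum>i<tau. eta^i) * (eta^k * a k)" .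
  qed
  also have "\<dots> = (\<Sum>i<tau. eta^i) * (\<Sum>k<T. eta^k * a k)" by (simp add: sum_distrib_left)
  finally show ?thesis .
qed

lemma sum_argument:
  fixes Phi a :: "nat \<Rightarrow> real" and eta X Y Z :: real and tau :: nat
  assumes step: "\<And>t. t \<ge> 1 \<Longrightarrow> eta * Phi t - Phi (t - 1)
        \<le> X * a t + Y * a (t - 1) + Z * (\<Sum>k<t. if t \<le> k + tau then a k else 0)"
    and a0: "\<And>k. a k \<ge> 0" and eta0: "eta \<ge> 0" and X0: "X \<le> 0" and Z0: "Z \<ge> 0"
    and YZ: "Y + (\<Sum>i<tau. eta^i) * Z \<le> 0"
  shows "eta^T * Phi T \<le> Phi 0"
proof -
  define W where "W t = (\<Sum>k<t. if t \<le> k + tau then a k else 0)" for t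
  have G: "eta^T * Phi T \<le> Phi 0 + (\<Sum>t<T. eta^t * (X * a (Suc t) + Y * a t + Z * W (Suc t)))" for T
  proof (induction T)
    case 0 thus ?case by simp
  next
    case (Suc T)
    have st: "eta * Phi (Suc T) - Phi T \<le> X * a (Suc T) + Y * a T + Z * W (Suc T)"
      using step[of "Suc T"] by (simp add: W_def)
    have "eta^Suc T * Phi (Suc T) = eta^T * (eta * Phi (Suc T))" by simp
    also have "\<dots> \<le> eta^T * (Phi T + (X * a (Suc T) + Y * a T + Z * W (Suc T)))"
      using st eta0 by (intro mult_left_mono) auto
    also have "\<dots> = eta^T * Phi T + eta^T * (X * a (Suc T) + Y * a T + Z * W (Suc T))"
      by (simp add: algebra_simps)
    also have "\<dots> \<le> Phi 0 + (\<Sum>t<Suc T. eta^t * (X * a (Suc t) + Y * a t + Z * W (Suc t)))"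
      using Suc.IH by simp
    finally show ?case .
  qed
  have s1: "(\<Sum>t<T. eta^t * (X * a (Suc t))) \<le> 0"
  proof (rule sum_nonpos)
    fix t show "eta^t * (X * a (Suc t)) \<le> 0"
      using X0 a0[of "Suc t"] eta0 by (simp add: mult_nonneg_nonpos mult_nonpos_nonneg)
  qed
  have s2: "(\<Sum>t<T. eta^t * (Z * W (Suc t))) \<le> Z * ((\<Sum>i<tau. eta^i) * (\<Sum>k<T. eta^k * a k))"
  proof -
    have "(\<Sum>t<T. eta^t * (Z * W (Suc t))) = Z * (\<Sum>t<T. eta^t * W (Suc t))"
      by (simp add: sum_distrib_left algebra_simps)
    also have "\<dots> \<le> Z * ((\<Sum>i<tau. eta^i) * (\<Sum>k<T. eta^k * a k))"
      using window_swap[OF a0 eta0, where T=T and tau=tau] Z0 by (intro mult_left_mono) (auto simp: W_def)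
    finally show ?thesis .
  qed
  have s3: "(\<Sum>t<T. eta^t * (Y * a t)) = Y * (\<Sum>k<T. eta^k * a k)"
    by (simp add: sum_distrib_left algebra_simps)
  have s4: "(\<Sum>k<T. eta^k * a k) \<ge> 0" using a0 eta0 by (intro sum_nonneg) auto
  have s5: "(Y + (\<Sum>i<tau. eta^i) * Z) * (\<Sum>k<T. eta^k * a k) \<le> 0"
    using YZ s4 by (simp add: mult_nonpos_nonneg)
  have sp: "(\<Sum>t<T. eta^t * (X * a (Suc t) + Y * a t + Z * W (Suc t)))
      = (\<Sum>t<T. eta^t * (X * a (Suc t))) + (\<Sum>t<T. eta^t * (Y * a t)) + (\<Sum>t<T. eta^t * (Z * W (Suc t)))"
    by (simp add: sum.distrib algebra_simps)
  have "(\<Sum>t<T. eta^t * (X * a (Suc t) + Y * a t + Z * W (Suc t))) \<le> 0"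
  proof -
    have "Y * (\<Sum>k<T. eta^k * a k) + Z * ((\<Sum>i<tau. eta^i) * (\<Sum>k<T. eta^k * a k)) \<le> 0"
      using s5 by (simp add: algebra_simps)
    thus ?thesis using sp s1 s2 s3 by linarith
  qed
  thus ?thesis using G[of T] by linarith
qed



theorem corollary2:
  fixes m n :: nat
    and l :: "nat \<Rightarrow> nat \<Rightarrow> 'a::euclidean_space \<Rightarrow> real"
    and h :: "'a \<Rightarrow> ereal"
    and Lj :: "nat \<Rightarrow> 'a \<Rightarrow> real"
    and gL :: "nat \<Rightarrow> 'a \<Rightarrow> 'a"
    and F :: "'a \<Rightarrow> 'a \<Rightarrow> ereal"
    and xstar :: 'a
    and x eps :: "nat \<Rightarrow> 'a"
    and A :: "nat \<Rightarrow> nat set"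
    and \<rho> L \<sigma> c1 \<delta> \<delta>1 D \<eta> :: real
    and \<tau> :: nat
  assumes m2: "m \<ge> 2" and n1: "n \<ge> 1"
    and l_smooth: "\<forall>j\<in>{1..m}. \<forall>i\<in>{1..n}. smooth_fun (l j i)"
    and h_proper: "proper_fun h" and h_lsc: "lsc_fun h" and h_convex: "convex_fun h"
    and Lj_def: "\<forall>j y. Lj j y = (1 / real n) * (\<Sum>i=1..n. l j i y)"
    and xstar_min: "\<forall>y. ereal ((1 / real m) * (\<Sum>j=1..m. Lj j xstar)) + h xstar
                        \<le> ereal ((1 / real m) * (\<Sum>j=1..m. Lj j y)) + h y"
    and F_def: "\<forall>y z. F y z = ereal ((1 / real m) * (\<Sum>j=1..m. Lj j y) + \<rho> / 2 * (norm (y - z))\<^sup>2) + h y"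
    and rho: "\<rho> \<ge> 0"
    and A_sub: "\<forall>t. A t \<subseteq> {1..m}" and A0: "A 0 = {1..m}"
    and iter: "\<forall>t. eps t - (gL 1 (x (t + 1))
                          + (1 / real m) *\<^sub>R (\<Sum>j=1..m. gL j (x (tlast A j t)))
                          - gL 1 (x (tlast A 1 t))
                          + \<rho> *\<^sub>R (x (t + 1) - x t)) \<in> subdiff h (x (t + 1))"
    and A1: "\<forall>i\<in>{1..m}. \<forall>t. \<exists>s. t - \<tau> \<le> s \<and> s \<le> t \<and> i \<in> A s"
    and A2_grad: "\<forall>j\<in>{1..m}. \<forall>y. GDERIV (Lj j) y :> gL j y"
    and A2_lip: "\<forall>j\<in>{1..m}. \<forall>y z. norm (gL j y - gL j z) \<le> L * norm (y - z)"
    and A3: "\<sigma>\<^sup>2 > 0"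
    and A3_sc: "\<forall>j\<in>{1..m}. \<forall>y z. Lj j y \<ge> Lj j z + inner (gL j z) (y - z) + \<sigma>\<^sup>2 / 2 * (norm (y - z))\<^sup>2"
    and A5: "c1 > 0" "\<forall>t>0. (norm (eps t))\<^sup>2 < c1 * (norm (x t - x (t - 1)))\<^sup>2"
    and delta: "\<delta> > 0" and delta1: "\<delta>1 > (2 * L + \<rho> + 1) / \<sigma>\<^sup>2"
    and D_def: "D = \<rho> / 2 * (1 + \<delta>1) + \<delta>1"
    and eta_def: "\<eta> = 1 + 1 / D"
    and cond1: "(\<delta>1 * L + \<rho> / 2 * (1 + \<delta>1) + 1 / 2) / D + 3 * L / 2 - (\<rho> - 1) / 2 + L * \<delta> * real \<tau> < 0"
    and cond2: "(\<delta>1 * L + \<rho> / 2 * (1 + \<delta>1) + 1 / 2) / D + 3 * L / 2 - (\<rho> - 1) / 2 + L * \<delta> * real \<tau>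
                 - (\<rho> - c1) * \<eta> / 2
                 + (L / \<delta> + (\<delta>1 / 2 * L\<^sup>2 * real \<tau>) / D) * ((\<eta> ^ \<tau> - 1) / (\<eta> - 1))
                 + c1 * \<eta> / D < 0"
  shows "\<forall>t. 0 \<le> F (x (t + 1)) (x t) - F xstar xstar
             \<and> F (x (t + 1)) (x t) - F xstar xstar \<le> ereal (1 / \<eta> ^ t) * (F (x 1) (x 0) - F xstar xstar)"
proof -
  have m0: "real m > 0" using m2 by simp
  have one_in: "1 \<in> {1..m}" using m2 by simp
  define s2 where "s2 = \<sigma>\<^sup>2"
  have s2pos: "s2 > 0" using A3 by (simp add: s2_def)
  define f where "f y = (1 / real m) * (\<Sum>j=1..m. Lj j y)" for y
  define gf where "gf y = (1 / real m) *\<^sub>R (\<Sum>j=1..m. gL j y)" for y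
  have fSC: "f y \<ge> f z + inner (gf z) (y - z) + s2 / 2 * (norm (y - z))\<^sup>2" for y z
  proof -
    have "(\<Sum>j=1..m. Lj j z + inner (gL j z) (y - z) + s2 / 2 * (norm (y - z))\<^sup>2) \<le> (\<Sum>j=1..m. Lj j y)"
      using A3_sc by (intro sum_mono) (simp add: s2_def)
    moreover have "(\<Sum>j=1..m. Lj j z + inner (gL j z) (y - z) + s2 / 2 * (norm (y - z))\<^sup>2)
       = (\<Sum>j=1..m. Lj j z) + inner (\<Sum>j=1..m. gL j z) (y - z) + real m * (s2 / 2 * (norm (y - z))\<^sup>2)"
      by (simp add: sum.distrib inner_sum_left)
    ultimately have "(1 / real m) * ((\<Sum>j=1..m. Lj j z) + inner (\<Sum>j=1..m. gL j z) (y - z) + real m * (s2 / 2 * (norm (y - z))\<^sup>2))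
        \<le> (1 / real m) * (\<Sum>j=1..m. Lj j y)"
      using m0 by (intro mult_left_mono) auto
    moreover have "(1 / real m) * ((\<Sum>j=1..m. Lj j z) + inner (\<Sum>j=1..m. gL j z) (y - z) + real m * (s2 / 2 * (norm (y - z))\<^sup>2))
        = f z + inner (gf z) (y - z) + s2 / 2 * (norm (y - z))\<^sup>2"
      using m0 by (simp add: f_def gf_def distrib_left)
    ultimately show ?thesis by (simp add: f_def)
  qed
  have mono1: "inner (gL j y - gL j z) (y - z) \<ge> s2 * (norm (y - z))\<^sup>2" if j: "j \<in> {1..m}" for j y z
  proof -
    have a1: "Lj j y \<ge> Lj j z + inner (gL j z) (y - z) + s2 / 2 * (norm (y - z))\<^sup>2" using A3_sc j by (simp add: s2_def)
    have a2: "Lj j z \<ge> Lj j y + inner (gL j y) (z - y) + s2 / 2 * (norm (z - y))\<^sup>2" using A3_sc j by (simp add: s2_def)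
    have e1: "inner (gL j y) (z - y) = - inner (gL j y) (y - z)" by (simp add: inner_diff_right)
    have e2: "norm (z - y) = norm (y - z)" by (rule norm_minus_commute)
    have e3: "inner (gL j y - gL j z) (y - z) = inner (gL j y) (y - z) - inner (gL j z) (y - z)" by (simp add: inner_diff_left)
    have e4: "s2 * (norm (y - z))\<^sup>2 = s2 / 2 * (norm (y - z))\<^sup>2 + s2 / 2 * (norm (y - z))\<^sup>2" by simp
    show ?thesis using a1 a2[unfolded e1 e2] e3 e4 by linarith
  qed
  have Lge: "s2 \<le> L"
  proof -
    obtain e0 :: 'a where e0: "e0 \<in> Basis" using nonempty_Basis by blast
    have ne: "norm e0 = 1" using e0 by simp
    have "s2 * (norm (e0 - 0))\<^sup>2 \<le> inner (gL 1 e0 - gL 1 0) (e0 - 0)" using mono1[OF one_in] by blast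
    also have "\<dots> \<le> norm (gL 1 e0 - gL 1 0) * norm (e0 - 0)" by (rule norm_cauchy_schwarz)
    also have "\<dots> \<le> L * norm (e0 - 0) * norm (e0 - 0)"
    proof (rule mult_right_mono)
      show "norm (gL 1 e0 - gL 1 0) \<le> L * norm (e0 - 0)" using A2_lip one_in by blast
    qed simp
    finally show ?thesis using ne by (simp add: power2_eq_square)
  qed
  have L0: "L > 0" using Lge s2pos by linarith
  have hnm: "h y \<noteq> - \<infinity>" for y using h_proper by (simp add: proper_fun_def)
  define v where "v t = eps t - (gL 1 (x (t + 1)) + (1 / real m) *\<^sub>R (\<Sum>j=1..m. gL j (x (tlast A j t)))
                          - gL 1 (x (tlast A 1 t)) + \<rho> *\<^sub>R (x (t + 1) - x t))" for t
  have vsub: "v t \<in> subdiff h (x (t + 1))" for t using iter by (simp add: v_def)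
  have hfin: "h (x (t + 1)) \<noteq> \<infinity>" for t using vsub[of t] by (simp add: subdiff_def)
  have hineq: "h y \<ge> h (x (t + 1)) + ereal (inner (v t) (y - x (t + 1)))" for t y
    using vsub[of t] by (simp add: subdiff_def)
  define H where "H y = real_of_ereal (h y)" for y
  have hreal: "h y = ereal (H y)" if "h y \<noteq> \<infinity>" for y
    using that hnm[of y] by (cases "h y") (auto simp: H_def)
  define w where "w t = v t + gf (x (t + 1))" for t
  have SC: "f y + H y \<ge> f (x (t + 1)) + H (x (t + 1)) + inner (w t) (y - x (t + 1)) + s2 / 2 * (norm (y - x (t + 1)))\<^sup>2"
    if hy: "h y \<noteq> \<infinity>" for t y
  proof -
    have "ereal (H y) \<ge> ereal (H (x (t + 1))) + ereal (inner (v t) (y - x (t + 1)))"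
      using hineq[of t y] hreal[OF hy] hreal[OF hfin[of t]] by simp
    hence i1: "H y \<ge> H (x (t + 1)) + inner (v t) (y - x (t + 1))" by simp
    have i2: "f y \<ge> f (x (t + 1)) + inner (gf (x (t + 1))) (y - x (t + 1)) + s2 / 2 * (norm (y - x (t + 1)))\<^sup>2"
      by (rule fSC)
    have i3: "inner (w t) (y - x (t + 1)) = inner (v t) (y - x (t + 1)) + inner (gf (x (t + 1))) (y - x (t + 1))"
      by (simp add: w_def inner_add_left)
    show ?thesis using i1 i2 i3 by linarith
  qed
  have hstar: "h xstar \<noteq> \<infinity>"
  proof
    assume inf: "h xstar = \<infinity>"
    have "ereal ((1 / real m) * (\<Sum>j=1..m. Lj j xstar)) + h xstar \<le> ereal ((1 / real m) * (\<Sum>j=1..m. Lj j (x (0 + 1)))) + h (x (0 + 1))"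
      using xstar_min by blast
    thus False using inf hreal[OF hfin[of 0]] by simp
  qed
  define Fs where "Fs = f xstar + H xstar"
  define Phi where "Phi t = f (x (t + 1)) + H (x (t + 1)) + \<rho> / 2 * (norm (x (t + 1) - x t))\<^sup>2 - Fs" for t
  define psi where "psi t = f (x (t + 1)) + H (x (t + 1)) - Fs" for t
  have FPhi: "F (x (t + 1)) (x t) - F xstar xstar = ereal (Phi t)" for t
  proof -
    have "F (x (t + 1)) (x t) = ereal (f (x (t + 1)) + \<rho> / 2 * (norm (x (t + 1) - x t))\<^sup>2) + ereal (H (x (t + 1)))"
      using F_def hreal[OF hfin[of t]] by (simp add: f_def)
    moreover have "F xstar xstar = ereal (f xstar) + ereal (H xstar)"
      using F_def hreal[OF hstar] by (simp add: f_def)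
    ultimately show ?thesis by (simp add: Phi_def Fs_def)
  qed
  have psi_nn: "psi t \<ge> 0" for t
  proof -
    have "ereal ((1 / real m) * (\<Sum>j=1..m. Lj j xstar)) + h xstar \<le> ereal ((1 / real m) * (\<Sum>j=1..m. Lj j (x (t + 1)))) + h (x (t + 1))"
      using xstar_min by blast
    hence "ereal (f xstar) + ereal (H xstar) \<le> ereal (f (x (t + 1))) + ereal (H (x (t + 1)))"
      using hreal[OF hstar] hreal[OF hfin[of t]] by (simp add: f_def)
    thus ?thesis by (simp add: psi_def Fs_def)
  qed
  have Phi_psi: "Phi t = psi t + \<rho> / 2 * (norm (x (t + 1) - x t))\<^sup>2" for t by (simp add: Phi_def psi_def)
  have Phi_nn: "Phi t \<ge> 0" for t using psi_nn[of t] rho by (simp add: Phi_psi)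
  have tl: "t - \<tau> \<le> tlast A j t \<and> tlast A j t \<le> t" if j: "j \<in> {1..m}" for j t
  proof (cases "j = 1")
    case True thus ?thesis by (simp add: tlast_def)
  next
    case False
    obtain s0 where s0: "t - \<tau> \<le> s0" "s0 \<le> t" "j \<in> A s0" using A1 j by blast
    let ?P = "\<lambda>s. s \<le> t \<and> j \<in> A s"
    have "?P (Greatest ?P)" by (rule GreatestI_nat[of ?P s0 t]) (use s0 in auto)
    moreover have "s0 \<le> Greatest ?P" by (rule Greatest_le_nat[of ?P s0 t]) (use s0 in auto)
    ultimately show ?thesis using False s0 by (simp add: tlast_def)
  qed
  define d where "d k = x (k + 1) - x k" for k
  define a where "a k = (norm (d k))\<^sup>2" for k
  define bb where "bb k = norm (d k)" for k
  define sw where "sw t = (\<Sum>k<t. if t \<le> k + \<tau> then bb k else 0)" for t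
  define Sw where "Sw t = (\<Sum>k<t. if t \<le> k + \<tau> then a k else 0)" for t
  define W where "W t = {k \<in> {..<t}. t \<le> k + \<tau>}" for t
  have bb0: "bb k \<ge> 0" for k by (simp add: bb_def)
  have a0: "a k \<ge> 0" for k by (simp add: a_def)
  have abb: "a k = (bb k)\<^sup>2" for k by (simp add: a_def bb_def)
  have finW: "finite (W t)" for t by (simp add: W_def)
  have cardW: "card (W t) \<le> \<tau>" for t
  proof -
    have "W t \<subseteq> {t - \<tau>..<t}" by (auto simp: W_def)
    hence "card (W t) \<le> card {t - \<tau>..<t}" by (intro card_mono) auto
    thus ?thesis by simp
  qed
  have swW: "sw t = (\<Sum>k\<in>W t. bb k)" for t
    unfolding sw_def W_def by (rule sum.inter_filter[symmetric]) simp
  have SwW: "Sw t = (\<Sum>k\<in>W t. a k)" for t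
    unfolding Sw_def W_def by (rule sum.inter_filter[symmetric]) simp
  have Sw0: "Sw t \<ge> 0" for t unfolding SwW using a0 by (intro sum_nonneg) auto
  have sw0: "sw t \<ge> 0" for t unfolding swW using bb0 by (intro sum_nonneg) auto
  have dist: "norm (x k0 - x (t + 1)) \<le> bb t + sw t" if k0: "k0 \<le> t" "t \<le> k0 + \<tau>" for k0 t
  proof -
    have "x (t + 1) - x k0 = (\<Sum>i=k0..t. x (Suc i) - x i)"
      using k0 by (simp add: sum_Suc_diff)
    hence "norm (x k0 - x (t + 1)) = norm (\<Sum>i=k0..t. d i)"
      by (metis (no_types, lifting) d_def norm_minus_commute Suc_eq_plus1 sum.cong)
    also have "\<dots> \<le> (\<Sum>i=k0..t. bb i)" unfolding bb_def by (rule norm_sum)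
    also have "\<dots> = (\<Sum>i\<in>{k0..<t}. bb i) + bb t"
      using k0 by (simp add: atLeastLessThanSuc_atLeastAtMost[symmetric])
    also have "(\<Sum>i\<in>{k0..<t}. bb i) \<le> sw t"
    proof -
      have "(\<Sum>i\<in>{k0..<t}. bb i) = (\<Sum>i\<in>{k0..<t}. if t \<le> i + \<tau> then bb i else 0)"
        using k0 by (intro sum.cong) auto
      also have "\<dots> \<le> sw t" unfolding sw_def using bb0 by (intro sum_mono2) auto
      finally show ?thesis .
    qed
    finally show ?thesis by linarith
  qed
  have ss: "(sw t)\<^sup>2 \<le> real \<tau> * Sw t" for t
  proof -
    have "(sw t)\<^sup>2 \<le> (\<Sum>k\<in>W t. (bb k)\<^sup>2) * card (W t)" unfolding swW by (rule sum_squared_le_sum_of_squares)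
    also have "\<dots> = Sw t * card (W t)" by (simp add: SwW abb)
    also have "\<dots> \<le> Sw t * real \<tau>" using cardW[of t] Sw0[of t] by (intro mult_left_mono) auto
    finally show ?thesis by (simp add: mult.commute)
  qed
  have bs: "bb t * sw t \<le> real \<tau> * \<delta> / 2 * (bb t)\<^sup>2 + Sw t / (2 * \<delta>)" for t
  proof -
    have "bb t * sw t = (\<Sum>k\<in>W t. bb t * bb k)" by (simp add: swW sum_distrib_left)
    also have "\<dots> \<le> (\<Sum>k\<in>W t. \<delta> / 2 * (bb t)\<^sup>2 + (bb k)\<^sup>2 / (2 * \<delta>))"
      using young_le[OF delta] by (intro sum_mono) auto
    also have "\<dots> = card (W t) * (\<delta> / 2 * (bb t)\<^sup>2) + Sw t / (2 * \<delta>)"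
      by (simp add: sum.distrib SwW abb sum_divide_distrib)
    also have "\<dots> \<le> real \<tau> * (\<delta> / 2 * (bb t)\<^sup>2) + Sw t / (2 * \<delta>)"
      using cardW[of t] delta by (intro add_right_mono mult_right_mono) auto
    finally show ?thesis by (simp add: algebra_simps)
  qed
  define e where "e t = gL 1 (x (t + 1)) - gL 1 (x t)
      + (1 / real m) *\<^sub>R (\<Sum>j=1..m. gL j (x (tlast A j t)) - gL j (x (t + 1)))" for t
  have w_eq: "w t = eps t - e t - \<rho> *\<^sub>R d t" for t
  proof -
    have tl1: "tlast A 1 t = t" by (simp add: tlast_def)
    show ?thesis
      unfolding w_def v_def gf_def e_def d_def tl1 sum_subtractf scaleR_diff_right
      by (simp add: algebra_simps)
  qed
  have Dj: "norm (gL j (x (tlast A j t)) - gL j (x (t + 1))) \<le> L * (bb t + sw t)"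
    if j: "j \<in> {1..m}" for j t
  proof -
    have "norm (gL j (x (tlast A j t)) - gL j (x (t + 1))) \<le> L * norm (x (tlast A j t) - x (t + 1))"
      using A2_lip j by blast
    also have "\<dots> \<le> L * (bb t + sw t)"
    proof -
      have "tlast A j t \<le> t" "t \<le> tlast A j t + \<tau>" using tl[OF j, of t] by auto
      thus ?thesis using dist L0 by (intro mult_left_mono) auto
    qed
    finally show ?thesis .
  qed
  have ed: "- inner (e t) (d t) \<le> L * (norm (d t))\<^sup>2 + L * (norm (d t) * sw t)" for t
  proof -
    have i1: "inner (gL 1 (x (t + 1)) - gL 1 (x t)) (d t) \<ge> 0"
    proof -
      have "inner (gL 1 (x (t + 1)) - gL 1 (x t)) (x (t + 1) - x t) \<ge> s2 * (norm (x (t + 1) - x t))\<^sup>2"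
        by (rule mono1[OF one_in])
      moreover have "s2 * (norm (x (t + 1) - x t))\<^sup>2 \<ge> 0" using s2pos by simp
      ultimately show ?thesis by (simp add: d_def)
    qed
    have i2: "- inner (gL j (x (tlast A j t)) - gL j (x (t + 1))) (d t) \<le> L * (bb t + sw t) * bb t"
      if j: "j \<in> {1..m}" for j
    proof -
      have "- inner (gL j (x (tlast A j t)) - gL j (x (t + 1))) (d t)
          \<le> norm (gL j (x (tlast A j t)) - gL j (x (t + 1))) * norm (d t)"
        using norm_cauchy_schwarz[of "- (gL j (x (tlast A j t)) - gL j (x (t + 1)))" "d t"]
        by (simp only: inner_minus_left norm_minus_cancel)
      also have "\<dots> \<le> L * (bb t + sw t) * bb t"
        unfolding bb_def[symmetric] using Dj[OF j, of t] bb0[of t] by (rule mult_right_mono)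
      finally show ?thesis .
    qed
    have "- inner (e t) (d t) = - inner (gL 1 (x (t + 1)) - gL 1 (x t)) (d t)
        + (1 / real m) * (\<Sum>j=1..m. - inner (gL j (x (tlast A j t)) - gL j (x (t + 1))) (d t))"
      by (simp add: e_def inner_add_left inner_sum_left sum_negf)
    also have "\<dots> \<le> 0 + (1 / real m) * (\<Sum>j=1..m. L * (bb t + sw t) * bb t)"
      using i1 i2 m0 by (intro add_mono mult_left_mono sum_mono) auto
    also have "\<dots> = L * (bb t + sw t) * bb t" using m0 by simp
    also have "\<dots> = L * (norm (d t))\<^sup>2 + L * (norm (d t) * sw t)"
      by (simp add: bb_def power2_eq_square algebra_simps)
    finally show ?thesis .
  qed
  have en: "norm (e t) \<le> 2 * L * norm (d t) + L * sw t" for t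
  proof -
    have n1: "norm (gL 1 (x (t + 1)) - gL 1 (x t)) \<le> L * bb t"
      using A2_lip one_in by (simp add: bb_def d_def)
    have n2: "norm ((1 / real m) *\<^sub>R (\<Sum>j=1..m. gL j (x (tlast A j t)) - gL j (x (t + 1)))) \<le> L * (bb t + sw t)"
    proof -
      have "norm ((1 / real m) *\<^sub>R (\<Sum>j=1..m. gL j (x (tlast A j t)) - gL j (x (t + 1))))
          = (1 / real m) * norm (\<Sum>j=1..m. gL j (x (tlast A j t)) - gL j (x (t + 1)))" using m0 by simp
      also have "\<dots> \<le> (1 / real m) * (\<Sum>j=1..m. norm (gL j (x (tlast A j t)) - gL j (x (t + 1))))"
        using m0 by (intro mult_left_mono norm_sum) auto
      also have "\<dots> \<le> (1 / real m) * (\<Sum>j=1..m. L * (bb t + sw t))"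
        using Dj m0 by (intro mult_left_mono sum_mono) auto
      also have "\<dots> = L * (bb t + sw t)" using m0 by simp
      finally show ?thesis .
    qed
    have "norm (e t) \<le> norm (gL 1 (x (t + 1)) - gL 1 (x t))
        + norm ((1 / real m) *\<^sub>R (\<Sum>j=1..m. gL j (x (tlast A j t)) - gL j (x (t + 1))))"
      unfolding e_def by (rule norm_triangle_ineq)
    moreover have "L * (bb t + sw t) = L * bb t + L * sw t" by (simp add: distrib_left)
    moreover have "2 * L * norm (d t) = L * bb t + L * bb t" by (simp add: bb_def)
    ultimately show ?thesis using n1 n2 by linarith
  qed
  define tr where "tr = real \<tau>"
  define Q where "Q = s2 * D"
  define lam where "lam = 1 - \<rho> / Q"
  define K where "K = - ((\<delta>1 * L + \<rho> / 2 * (1 + \<delta>1) + 1 / 2) / D + 3 * L / 2 - (\<rho> - 1) / 2 + L * \<delta> * tr)"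
  define M where "M = 1 + 2 * K + L + L * \<delta> * tr + \<rho> / Q"
  define beta where "beta = \<rho> / 2 + s2 / 2 - \<rho> / (2 * D) - \<rho>^2 / (2 * Q)"
  define S where "S = (\<eta> ^ \<tau> - 1) / (\<eta> - 1)"
  define X where "X = M / 2 + lam * (L + L * \<delta> * tr / 2) - beta + 8 * L^2 / Q"
  define Y where "Y = c1 * (lam^2 / (2 * M) + 3 / (2 * Q)) - \<rho> / 2"
  define Z where "Z = lam * L / (2 * \<delta>) + (12/5) * L^2 * tr / (2 * Q)"
  have d1': "\<delta>1 > (2 * L + \<rho> + 1) / s2" using delta1 by (simp add: s2_def)
  have Dpos: "D > 0"
  proof -
    have "(2 * L + \<rho> + 1) / s2 > 0" using L0 rho s2pos by simp
    hence "\<delta>1 > 0" using d1' by linarith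
    moreover have "\<rho> / 2 * (1 + \<delta>1) \<ge> 0" using rho \<open>\<delta>1 > 0\<close> by simp
    ultimately show ?thesis using D_def by linarith
  qed
  have eta1: "\<eta> > 1" using Dpos eta_def by simp
  have S_sum: "S = (\<Sum>i<\<tau>. \<eta>^i)" using eta1 by (simp add: S_def geometric_sum)
  have S0: "S \<ge> 0" unfolding S_sum using eta1 by (intro sum_nonneg) auto
  have tr0: "tr \<ge> 0" by (simp add: tr_def)
  have c1': "(\<delta>1 * L + \<rho> / 2 * (1 + \<delta>1) + 1 / 2) / D + 3 * L / 2 - (\<rho> - 1) / 2 + L * \<delta> * tr < 0"
    using cond1 unfolding tr_def .
  have c2': "(\<delta>1 * L + \<rho> / 2 * (1 + \<delta>1) + 1 / 2) / D + 3 * L / 2 - (\<rho> - 1) / 2 + L * \<delta> * tr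
                 - (\<rho> - c1) * \<eta> / 2
                 + (L / \<delta> + (\<delta>1 / 2 * L^2 * tr) / D) * S
                 + c1 * \<eta> / D < 0"
    using cond2 unfolding tr_def S_def .
  note PL = param_lemma[OF s2pos Lge rho A5(1) delta tr0 d1' D_def eta_def S0 c1' c2' Q_def lam_def K_def M_def beta_def]
  have P: "X \<le> 0" "Y + S * Z \<le> 0" "0 < lam" "lam \<le> 1" "0 < M" "0 < Q" "\<rho> < Q"
    using PL unfolding X_def Y_def Z_def by (auto simp: algebra_simps)
  have step: "\<eta> * Phi t - Phi (t - 1) \<le> X * a t + Y * a (t - 1) + Z * Sw t" if t1: "t \<ge> 1" for t
  proof -
    obtain t' where tt: "t = Suc t'" using t1 by (cases t) auto
    have hx: "h (x t) \<noteq> \<infinity>" using hfin[of t'] tt by simp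
    have desc: "psi t \<le> psi t' + inner (w t) (d t) - s2 / 2 * (norm (d t))\<^sup>2"
    proof -
      have "f (x t) + H (x t) \<ge> f (x (t + 1)) + H (x (t + 1)) + inner (w t) (x t - x (t + 1)) + s2 / 2 * (norm (x t - x (t + 1)))\<^sup>2"
        by (rule SC[OF hx])
      moreover have "inner (w t) (x t - x (t + 1)) = - inner (w t) (d t)"
        by (simp add: d_def inner_diff_right)
      moreover have "norm (x t - x (t + 1)) = norm (d t)" by (simp add: d_def norm_minus_commute)
      moreover have "psi t' = f (x t) + H (x t) - Fs" using tt by (simp add: psi_def)
      ultimately show ?thesis by (simp add: psi_def)
    qed
    have err: "psi t \<le> inner (w t) (x (t + 1) - xstar) - s2 / 2 * (norm (x (t + 1) - xstar))\<^sup>2"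
    proof -
      have "f xstar + H xstar \<ge> f (x (t + 1)) + H (x (t + 1)) + inner (w t) (xstar - x (t + 1)) + s2 / 2 * (norm (xstar - x (t + 1)))\<^sup>2"
        by (rule SC[OF hstar])
      moreover have "inner (w t) (xstar - x (t + 1)) = - inner (w t) (x (t + 1) - xstar)"
        by (simp add: inner_diff_right)
      moreover have "norm (xstar - x (t + 1)) = norm (x (t + 1) - xstar)" by (rule norm_minus_commute)
      ultimately show ?thesis by (simp add: psi_def Fs_def)
    qed
    have epb: "(norm (eps t))\<^sup>2 \<le> c1 * a t'"
    proof -
      have "(norm (eps t))\<^sup>2 < c1 * (norm (x t - x (t - 1)))\<^sup>2" using A5(2) t1 by simp
      thus ?thesis using tt by (simp add: a_def d_def)
    qed
    have bs': "norm (d t) * sw t \<le> tr * \<delta> / 2 * (norm (d t))\<^sup>2 + Sw t / (2 * \<delta>)"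
      using bs[of t] by (simp add: bb_def tr_def)
    have ss': "(sw t)\<^sup>2 \<le> tr * Sw t" using ss[of t] by (simp add: tr_def)
    have main: "(1 + 1 / D) * (psi t + \<rho> / 2 * (norm (d t))\<^sup>2) - (psi t' + \<rho> / 2 * a t') \<le>
       (M / 2 + lam * (L + L * \<delta> * tr / 2) - beta + 8 * L^2 / Q) * (norm (d t))^2
       + (c1 * (lam^2 / (2 * M) + 3 / (2 * Q)) - \<rho> / 2) * a t'
       + (lam * L / (2 * \<delta>) + (12/5) * L^2 * tr / (2 * Q)) * Sw t"
      using step_ineq[OF desc err w_eq epb ed en sw0 ss' bs' s2pos Dpos _ rho P(5) _ delta _ Q_def lam_def beta_def]
        P(7) L0 A5(1) by (simp add: Q_def)
    have "Phi t = psi t + \<rho> / 2 * (norm (d t))\<^sup>2" by (simp add: Phi_psi d_def)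
    moreover have "Phi (t - 1) = psi t' + \<rho> / 2 * a t'" using tt by (simp add: Phi_psi a_def d_def)
    moreover have "a t = (norm (d t))\<^sup>2" by (simp add: a_def)
    ultimately show ?thesis using main by (simp add: eta_def X_def Y_def Z_def tt)
  qed
  have Z0: "Z \<ge> 0" using P(3) L0 delta P(6) tr0 by (simp add: Z_def)
  have step': "\<eta> * Phi t - Phi (t - 1) \<le> X * a t + Y * a (t - 1) + Z * (\<Sum>k<t. if t \<le> k + \<tau> then a k else 0)"
    if "t \<ge> 1" for t using step[OF that] by (simp add: Sw_def)
  have YS: "Y + (\<Sum>i<\<tau>. \<eta>^i) * Z \<le> 0" using P(2) S_sum by simp
  have eta0: "\<eta> \<ge> 0" using eta1 by simp
  have fin: "\<eta>^T * Phi T \<le> Phi 0" for T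
    by (rule sum_argument[OF step' a0 eta0 P(1) Z0 YS])
  show ?thesis
  proof
    fix t
    have "Phi t \<le> (1 / \<eta>^t) * Phi 0"
    proof -
      have "\<eta>^t > 0" using eta1 by simp
      thus ?thesis using fin[of t] by (simp add: field_simps)
    qed
    hence "ereal (Phi t) \<le> ereal (1 / \<eta>^t) * ereal (Phi 0)" by simp
    thus "0 \<le> F (x (t + 1)) (x t) - F xstar xstar
             \<and> F (x (t + 1)) (x t) - F xstar xstar \<le> ereal (1 / \<eta> ^ t) * (F (x 1) (x 0) - F xstar xstar)"
      using FPhi[of t] FPhi[of 0] Phi_nn[of t] by simp
  qed
qed

end
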